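(* Let $d\ge1$ and $\beta>0$. There exist constants $0<c_0<C_0$, $h_0>0$ and $A>0$ such that for every sample size $n$ there are two probability densities $f_1,f_2$ on $\mathbb{R}^d$, each with compact support and a unique global mode (denote the modes by $x_1$ and $x_2$), each satisfying, with $x_0$ its mode, $$f(x_0)-C_0\|x-x_0\|^\beta \le f(x)\le f(x_0)-c_0\|x-x_0\|^\beta \quad\text{whenever } \|x-x_0\|\le h_0,$$ $$f(x)\le f(x_0)-c_0h_0^\beta \quad\text{whenever } \|x-x_0\|\ge h_0,$$ whose modes satisfy $\|x_1-x_2\|\ge n^{-1/(d+2\beta)}/A$, and which cannot be distinguished based on an i.i.d. sample of size $n$ with probability of error smaller than $1/5$: for every test $\psi$ that is a measurable function of $X_1,\dots,X_n$ with values in $\{1,2\}$, $\max_{j\in\{1,2\}} P_{f_j}^{\otimes n}(\psi\ne j)\ge 1/5$.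
   Context: $\|x\|=\max_i|x_i|$ denotes the sup-norm on $\mathbb{R}^d$. $P_{f}^{\otimes n}$ denotes the law of an i.i.d. sample $X_1,\dots,X_n$ from density $f$. *)

theory Defs
  imports "HOL-Probability.Probability"
begin

text \<open>Sup-norm on R^d, with R^d rendered as real^'n (d = CARD('n)).\<close>
definition sup_norm :: "real^'n \<Rightarrow> real" where
  "sup_norm x = Max (range (\<lambda>i. \<bar>x $ i\<bar>))"

definition prob_density :: "(real^'n \<Rightarrow> real) \<Rightarrow> bool" where
  "prob_density f \<longleftrightarrow> f \<in> borel_measurable lborel \<and> (\<forall>x. 0 \<le> f x)
     \<and> (\<integral>\<^sup>+ x. ennreal (f x) \<partial>lborel) = 1"

definition compact_support :: "(real^'n \<Rightarrow> real) \<Rightarrow> bool" where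
  "compact_support f \<longleftrightarrow> compact (closure {x. f x \<noteq> 0})"

definition unique_mode :: "(real^'n \<Rightarrow> real) \<Rightarrow> real^'n \<Rightarrow> bool" where
  "unique_mode f x0 \<longleftrightarrow> (\<forall>x. x \<noteq> x0 \<longrightarrow> f x < f x0)"

definition mode_regular ::
  "real \<Rightarrow> real \<Rightarrow> real \<Rightarrow> real \<Rightarrow> (real^'n \<Rightarrow> real) \<Rightarrow> real^'n \<Rightarrow> bool" where
  "mode_regular c0 C0 h0 \<beta> f x0 \<longleftrightarrow>
     (\<forall>x. sup_norm (x - x0) \<le> h0 \<longrightarrow>
          f x0 - C0 * sup_norm (x - x0) powr \<beta> \<le> f x \<and>
          f x \<le> f x0 - c0 * sup_norm (x - x0) powr \<beta>) \<and>
     (\<forall>x. sup_norm (x - x0) \<ge> h0 \<longrightarrow> f x \<le> f x0 - c0 * h0 powr \<beta>)"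

definition sample_law :: "(real^'n \<Rightarrow> real) \<Rightarrow> nat \<Rightarrow> (nat \<Rightarrow> real^'n) measure" where
  "sample_law f n = PiM {..<n} (\<lambda>_. density lborel (\<lambda>x. ennreal (f x)))"

end

theory Submission
  imports Defs
begin


lemma sup_norm_ge: "\<bar>x $ i\<bar> \<le> sup_norm (x::real^'n)"
  unfolding sup_norm_def by (rule Max_ge) auto

lemma sup_norm_ex: "\<exists>i. sup_norm (x::real^'n) = \<bar>x $ i\<bar>"
proof -
  have "Max (range (\<lambda>i. \<bar>x $ i\<bar>)) \<in> range (\<lambda>i. \<bar>x $ i\<bar>)"
    by (rule Max_in) auto
  then show ?thesis unfolding sup_norm_def by (metis (no_types, lifting) imageE)
qed

lemma sup_norm_le_iff: "sup_norm (x::real^'n) \<le> r \<longleftrightarrow> (\<forall>i. \<bar>x $ i\<bar> \<le> r)"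
  by (metis order_trans sup_norm_ex sup_norm_ge)

lemma sup_norm_nonneg: "0 \<le> sup_norm (x::real^'n)"
  by (meson abs_ge_zero order_trans sup_norm_ge)

lemma sup_norm_triangle: "sup_norm ((x::real^'n) + y) \<le> sup_norm x + sup_norm y"
  unfolding sup_norm_le_iff
  by (metis abs_triangle_ineq add_mono order_trans sup_norm_ge vector_add_component)

lemma sup_norm_minus: "sup_norm (- (x::real^'n)) = sup_norm x"
  unfolding sup_norm_def by simp

lemma sup_norm_diff_commute: "sup_norm ((x::real^'n) - y) = sup_norm (y - x)"
  by (metis minus_diff_eq sup_norm_minus)

lemma sup_norm_zero_iff: "sup_norm (x::real^'n) = 0 \<longleftrightarrow> x = 0"
proof
  assume "sup_norm x = 0"
  then have "\<forall>i. \<bar>x $ i\<bar> \<le> 0" using sup_norm_le_iff by (metis order_refl)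
  then show "x = 0" by (simp add: vec_eq_iff)
next
  assume "x = 0" then show "sup_norm x = 0"
    using sup_norm_le_iff[of x 0] sup_norm_nonneg[of x] by auto
qed

lemma sup_norm_const: "0 \<le> d \<Longrightarrow> sup_norm ((\<chi> i. d)::real^'n) = d"
  using sup_norm_ex[of "(\<chi> i. d)::real^'n"] by auto

lemma sup_norm_le_norm: "sup_norm (x::real^'n) \<le> norm x"
  by (metis component_le_norm_cart sup_norm_ex)

lemma sup_norm_measurable[measurable]: "sup_norm \<in> borel_measurable (borel :: (real^'n) measure)"
proof -
  have "continuous_on UNIV (sup_norm :: real^'n \<Rightarrow> real)"
  proof (rule continuous_onI)
    fix x :: "real^'n" and e :: real assume "e > 0"
    show "\<exists>d>0. \<forall>x'\<in>UNIV. dist x' x < d \<longrightarrow> dist (sup_norm x') (sup_norm x) \<le> e"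
    proof (intro exI[of _ e] conjI ballI impI)
      fix y :: "real^'n" assume "dist y x < e"
      have "sup_norm y \<le> sup_norm x + sup_norm (y - x)"
        using sup_norm_triangle[of x "y - x"] by simp
      moreover have "sup_norm x \<le> sup_norm y + sup_norm (x - y)"
        using sup_norm_triangle[of y "x - y"] by simp
      moreover have "sup_norm (y - x) \<le> dist y x" "sup_norm (x - y) \<le> dist y x"
        using sup_norm_le_norm[of "y - x"] sup_norm_le_norm[of "x - y"]
        by (auto simp: dist_norm norm_minus_commute)
      ultimately show "dist (sup_norm y) (sup_norm x) \<le> e"
        using \<open>dist y x < e\<close> by (auto simp: dist_real_def)
    qed (use \<open>e > 0\<close> in auto)
  qed
  then show ?thesis by (rule borel_measurable_continuous_onI)
qed



definition gb :: "real \<Rightarrow> real^'n \<Rightarrow> real" where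
  "gb \<beta> x = max 0 (1 - sup_norm x powr \<beta>)"

definition Kc :: "real \<Rightarrow> real" where "Kc \<beta> = 1 + 2 powr \<beta>"

definition av :: "real \<Rightarrow> real^'n" where "av \<delta> = (\<chi> i. \<delta>)"

definition hb :: "real \<Rightarrow> real \<Rightarrow> real^'n \<Rightarrow> real" where
  "hb \<beta> \<delta> x = max (gb \<beta> x) (1 + \<delta> powr \<beta> - Kc \<beta> * sup_norm (x - av \<delta>) powr \<beta>)"

lemma powr_max_le: fixes u v b :: real shows "0 \<le> u \<Longrightarrow> 0 \<le> v \<Longrightarrow> 0 < b \<Longrightarrow> (max u v) powr b \<le> u powr b + v powr b"
  by (cases "u \<le> v") (auto simp: max_def)

lemma powr_le_double_max:
  fixes u v b w :: real
  assumes "0 \<le> u" "0 \<le> v" "0 < b" "0 \<le> w" "w \<le> u + v"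
  shows "2 powr (-b) * w powr b \<le> u powr b + v powr b"
proof -
  have "w \<le> 2 * max u v" using assms by auto
  then have "w powr b \<le> (2 * max u v) powr b"
    using assms by (intro powr_mono2) auto
  also have "\<dots> = 2 powr b * (max u v) powr b"
    using assms by (simp add: powr_mult)
  finally have "w powr b \<le> 2 powr b * (max u v) powr b" .
  then have "2 powr (-b) * w powr b \<le> 2 powr (-b) * (2 powr b * (max u v) powr b)"
    by (intro mult_left_mono) auto
  also have "\<dots> = (max u v) powr b"
    by (simp add: powr_minus field_simps)
  also have "\<dots> \<le> u powr b + v powr b" using powr_max_le assms by blast
  finally show ?thesis .
qed

lemma sup_norm_av_gen: "0 \<le> d \<Longrightarrow> sup_norm (av d :: real^'n) = d"
  unfolding av_def by (rule sup_norm_const)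

lemma tri1_gen: assumes "0 \<le> d" shows "sup_norm (x::real^'n) \<le> sup_norm (x - av d) + d"
proof -
  have "sup_norm x \<le> sup_norm (x - av d) + sup_norm (av d :: real^'n)"
    using sup_norm_triangle[of "x - av d" "av d"] by simp
  then show ?thesis using sup_norm_av_gen[OF assms, where 'n='n] by simp
qed

lemma tri2_gen: assumes "0 \<le> d" shows "sup_norm (x - av d :: real^'n) \<le> sup_norm x + d"
proof -
  have "sup_norm (x - av d) \<le> sup_norm x + sup_norm (- av d :: real^'n)"
    using sup_norm_triangle[of x "- av d"] by simp
  then show ?thesis using sup_norm_av_gen[OF assms, where 'n='n] sup_norm_minus[of "av d :: real^'n"] by simp
qed

locale L =
  fixes \<beta> \<delta> :: real
  assumes bpos: "0 < \<beta>" and dpos: "0 \<le> \<delta>" and dsmall: "(2 * \<delta>) powr \<beta> \<le> 1/2"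
begin

lemma d2_lt1: "2 * \<delta> < 1"
proof (rule ccontr)
  assume "\<not> 2 * \<delta> < 1"
  then have "1 \<le> (2 * \<delta>) powr \<beta>" using bpos by (simp add: ge_one_powr_ge_zero)
  then show False using dsmall by simp
qed


lemma sup_norm_av: "sup_norm (av \<delta> :: real^'n) = \<delta>"
  using dpos by (rule sup_norm_av_gen)

lemma tri1: "sup_norm (x::real^'n) \<le> sup_norm (x - av \<delta>) + \<delta>"
  using tri1_gen[OF dpos] .

lemma tri2: "sup_norm (x - av \<delta> :: real^'n) \<le> sup_norm x + \<delta>"
  using tri2_gen[OF dpos] .

lemma gb_nonneg: "0 \<le> gb \<beta> x" unfolding gb_def by simp
lemma gb_le1: "gb \<beta> x \<le> 1" unfolding gb_def by auto
lemma gb_ge: "1 - sup_norm x powr \<beta> \<le> gb \<beta> x" unfolding gb_def by simp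
lemma gb_inner: "sup_norm x \<le> 1 \<Longrightarrow> gb \<beta> x = 1 - sup_norm x powr \<beta>"
  unfolding gb_def using powr_le1[of \<beta> "sup_norm x"] bpos sup_norm_nonneg[of x] by auto
lemma gb_outer: "1 \<le> sup_norm x \<Longrightarrow> gb \<beta> x = 0"
  unfolding gb_def using ge_one_powr_ge_zero[of "sup_norm x" \<beta>] bpos by auto
lemma gb_supp: "gb \<beta> x \<noteq> 0 \<Longrightarrow> sup_norm x < 1"
  using gb_outer by force
lemma gb_zero: "gb \<beta> (0::real^'n) = 1"
  unfolding gb_def using sup_norm_zero_iff[of "0::real^'n"] by simp

lemma Kc_ge2: "2 \<le> Kc \<beta>" unfolding Kc_def using bpos by (simp add: ge_one_powr_ge_zero)

lemma cross: "2 powr (-\<beta>) * sup_norm (x - av \<delta> :: real^'n) powr \<beta> \<le> sup_norm x powr \<beta> + \<delta> powr \<beta>"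
  by (rule powr_le_double_max) (use sup_norm_nonneg dpos bpos tri2 in auto)

lemma region: assumes "hb \<beta> \<delta> x \<noteq> gb \<beta> x" shows "sup_norm (x - av \<delta> :: real^'n) \<le> \<delta>"
proof (rule ccontr)
  let ?r = "sup_norm (x - av \<delta>)"
  assume "\<not> ?r \<le> \<delta>"
  then have r: "\<delta> < ?r" by simp
  have "gb \<beta> x < 1 + \<delta> powr \<beta> - Kc \<beta> * ?r powr \<beta>"
    using assms unfolding hb_def by (auto simp: max_def split: if_splits)
  then have "Kc \<beta> * ?r powr \<beta> < \<delta> powr \<beta> + sup_norm x powr \<beta>"
    using gb_ge[of x] by linarith
  moreover have "\<delta> powr \<beta> \<le> ?r powr \<beta>" using r dpos bpos by (intro powr_mono2) auto
  moreover have "sup_norm x powr \<beta> \<le> (2 * ?r) powr \<beta>"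
    using tri1[of x] r dpos bpos sup_norm_nonneg[of x] by (intro powr_mono2) auto
  moreover have "(2 * ?r) powr \<beta> = 2 powr \<beta> * ?r powr \<beta>"
    using sup_norm_nonneg by (simp add: powr_mult)
  ultimately show False unfolding Kc_def by (simp add: algebra_simps)
qed

lemma region_x: assumes "hb \<beta> \<delta> x \<noteq> gb \<beta> x" shows "sup_norm (x :: real^'n) \<le> 2 * \<delta>"
  using region[OF assms] tri1[of x] by simp

lemma region_g: assumes "hb \<beta> \<delta> x \<noteq> gb \<beta> x" shows "1/2 \<le> gb \<beta> (x :: real^'n)"
proof -
  have "sup_norm x powr \<beta> \<le> (2 * \<delta>) powr \<beta>"
    using region_x[OF assms] sup_norm_nonneg bpos by (intro powr_mono2) auto
  then show ?thesis using gb_ge[of x] dsmall by linarith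
qed

lemma hb_ge: "gb \<beta> x \<le> hb \<beta> \<delta> x" unfolding hb_def by simp

lemma hb_nonneg: "0 \<le> hb \<beta> \<delta> x" using hb_ge gb_nonneg order_trans by blast

lemma hb_diff: "hb \<beta> \<delta> (x::real^'n) - gb \<beta> x \<le> Kc \<beta> * \<delta> powr \<beta>"
proof (cases "hb \<beta> \<delta> x = gb \<beta> x")
  case True
  then show ?thesis using dpos Kc_ge2 by simp
next
  case False
  have "hb \<beta> \<delta> x \<le> 1 + \<delta> powr \<beta>"
    unfolding hb_def using gb_le1[of x] Kc_ge2 by (auto intro!: add_increasing2 )
  moreover have "sup_norm x powr \<beta> \<le> (2 * \<delta>) powr \<beta>"
    using region_x[OF False] sup_norm_nonneg bpos by (intro powr_mono2) auto
  moreover have "(2 * \<delta>) powr \<beta> = 2 powr \<beta> * \<delta> powr \<beta>"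
    using dpos by (simp add: powr_mult)
  ultimately show ?thesis using gb_ge[of x] unfolding Kc_def by (simp add: algebra_simps)
qed

lemma hb_le2: "hb \<beta> \<delta> x \<le> 2"
proof -
  have "\<delta> \<le> 1" using d2_lt1 dpos by simp
  then have "\<delta> powr \<beta> \<le> 1" using dpos bpos by (intro powr_le1) auto
  moreover have "0 \<le> Kc \<beta> * sup_norm (x - av \<delta>) powr \<beta>" using Kc_ge2 by simp
  ultimately show ?thesis unfolding hb_def using gb_le1[of x] by auto
qed

lemma hb_supp: "hb \<beta> \<delta> x \<noteq> 0 \<Longrightarrow> sup_norm (x::real^'n) < 1"
  by (metis d2_lt1 gb_supp le_less_trans region_x)

lemma gb_eq_when_zero: assumes "gb \<beta> x = 0" shows "hb \<beta> \<delta> (x::real^'n) = 0"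
proof (rule ccontr)
  assume "hb \<beta> \<delta> x \<noteq> 0"
  then have "hb \<beta> \<delta> x \<noteq> gb \<beta> x" using assms by simp
  then have "1/2 \<le> gb \<beta> x" by (rule region_g)
  then show False using assms by simp
qed

lemma hb_at: "hb \<beta> \<delta> (av \<delta> :: real^'n) = 1 + \<delta> powr \<beta>"
proof -
  have "sup_norm (av \<delta> - av \<delta> :: real^'n) = 0" using sup_norm_zero_iff[of "0::real^'n"] by simp
  moreover have "gb \<beta> (av \<delta> :: real^'n) \<le> 1 + \<delta> powr \<beta>"
    using gb_le1[of "av \<delta> :: real^'n"] powr_ge_zero[of \<delta> \<beta>] by linarith
  ultimately show ?thesis
    unfolding hb_def by (simp add: max_absorb2)
qed

lemma hb_lower: "1 + \<delta> powr \<beta> - Kc \<beta> * sup_norm (x - av \<delta> :: real^'n) powr \<beta> \<le> hb \<beta> \<delta> x"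
  unfolding hb_def by simp

lemma hb_upper: "hb \<beta> \<delta> (x::real^'n) \<le> 1 + \<delta> powr \<beta> - 2 powr (-\<beta>) * min (sup_norm (x - av \<delta>)) 1 powr \<beta>"
proof -
  let ?r = "sup_norm (x - av \<delta>)"
  have c1: "2 powr (-\<beta>) \<le> 1" using powr_mono[of "-\<beta>" 0 2] bpos by simp
  have c2: "2 powr (-\<beta>) \<le> Kc \<beta>" using c1 Kc_ge2 by linarith
  have mr: "min ?r 1 powr \<beta> \<le> ?r powr \<beta>"
    using sup_norm_nonneg bpos by (intro powr_mono2) auto
  have m1: "min ?r 1 powr \<beta> \<le> 1"
    using sup_norm_nonneg[of "x - av \<delta>"] bpos by (intro powr_le1) auto
  have p2: "2 powr (-\<beta>) * min ?r 1 powr \<beta> \<le> Kc \<beta> * ?r powr \<beta>"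
    by (rule mult_mono[OF c2 mr]) (use Kc_ge2 in auto)
  have m0: "0 \<le> min ?r 1 powr \<beta>" by simp
  have g: "gb \<beta> x \<le> 1 + \<delta> powr \<beta> - 2 powr (-\<beta>) * min ?r 1 powr \<beta>"
  proof (cases "sup_norm x \<le> 1")
    case True
    have "2 powr (-\<beta>) * min ?r 1 powr \<beta> \<le> 2 powr (-\<beta>) * ?r powr \<beta>"
      by (rule mult_left_mono[OF mr]) simp
    then show ?thesis using gb_inner[OF True] cross[of x] by linarith
  next
    case False
    have "2 powr (-\<beta>) * min ?r 1 powr \<beta> \<le> 1 * 1"
      by (rule mult_mono[OF c1 m1]) auto
    moreover have "0 \<le> \<delta> powr \<beta>" by simp
    ultimately show ?thesis using gb_outer[of x] False by linarith
  qed
  show ?thesis unfolding hb_def using g p2 by auto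
qed

end


lemma cube_iff: "sup_norm (x - c :: real^'n) \<le> r \<longleftrightarrow> x \<in> cbox (c - (\<chi> i. r)) (c + (\<chi> i. r))"
  unfolding sup_norm_le_iff mem_box_cart by (auto simp: abs_le_iff algebra_simps)

lemma cube_measure: assumes "0 \<le> r"
  shows "measure lborel (cbox (c - (\<chi> i. r)) (c + (\<chi> i. r)) :: (real^'n) set) = (2*r)^CARD('n)"
proof -
  have "cbox (c - (\<chi> i. r)) (c + (\<chi> i. r)) \<noteq> ({} :: (real^'n) set)"
    using cube_iff[of c c r] sup_norm_zero_iff[of "0::real^'n"] assms by auto
  then show ?thesis by (simp add: content_cbox_cart prod_constant)
qed

lemma gb_meas[measurable]: "gb \<beta> \<in> borel_measurable (lborel :: (real^'n) measure)"
  unfolding gb_def by measurable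

lemma hb_meas[measurable]: "hb \<beta> \<delta> \<in> borel_measurable (lborel :: (real^'n) measure)"
  unfolding hb_def by measurable

lemma integrable_supp:
  fixes u :: "real^'n \<Rightarrow> real"
  assumes [measurable]: "u \<in> borel_measurable lborel"
    and b: "\<And>x. 0 \<le> u x \<and> u x \<le> b" and s: "\<And>x. u x \<noteq> 0 \<Longrightarrow> sup_norm (x - c) \<le> r"
    and r: "0 \<le> r"
  shows "integrable lborel u" "integral\<^sup>L lborel u \<le> b * (2*r)^CARD('n)"
proof -
  let ?C = "cbox (c - (\<chi> i. r)) (c + (\<chi> i. r)) :: (real^'n) set"
  have le: "u x \<le> b * indicator ?C x" for x
  proof (cases "u x = 0")
    case True then show ?thesis using b[of x] by (simp add: indicator_def)
  next
    case False then show ?thesis using s[OF False] cube_iff[of x c r] b[of x] by (simp add: indicator_def)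
  qed
  have ic: "integrable lborel (\<lambda>x. b * indicator ?C x :: real)"
    using emeasure_lborel_cbox_finite by (intro integrable_mult_right integrable_real_indicator) auto
  show i: "integrable lborel u"
    by (rule Bochner_Integration.integrable_bound[OF ic]) (use b le in \<open>auto intro!: AE_I2 simp: abs_of_nonneg intro: order_trans[OF _ abs_ge_self]\<close>)
  have "integral\<^sup>L lborel u \<le> integral\<^sup>L lborel (\<lambda>x. b * indicator ?C x :: real)"
    by (rule integral_mono[OF i ic le])
  also have "\<dots> = b * (2*r)^CARD('n)"
    using cube_measure[OF r, of c] by simp
  finally show "integral\<^sup>L lborel u \<le> b * (2*r)^CARD('n)" .
qed

lemma prob_density_norm:
  fixes u :: "real^'n \<Rightarrow> real"
  assumes [measurable]: "u \<in> borel_measurable lborel" and nn: "\<And>x. 0 \<le> u x"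
    and i: "integrable lborel u" and Z: "0 < integral\<^sup>L lborel u"
  shows "prob_density (\<lambda>x. u x / integral\<^sup>L lborel u)"
proof -
  let ?Z = "integral\<^sup>L lborel u"
  have i2: "integrable lborel (\<lambda>x. u x / ?Z)" using i by simp
  have "(\<integral>\<^sup>+ x. ennreal (u x / ?Z) \<partial>lborel) = ennreal (integral\<^sup>L lborel (\<lambda>x. u x / ?Z))"
    by (rule nn_integral_eq_integral[OF i2]) (use nn Z in \<open>auto intro!: AE_I2\<close>)
  also have "integral\<^sup>L lborel (\<lambda>x. u x / ?Z) = 1" using Z by simp
  finally show ?thesis unfolding prob_density_def using nn Z by auto
qed

lemma compact_supp:
  fixes u :: "real^'n \<Rightarrow> real"
  assumes "\<And>x. u x \<noteq> 0 \<Longrightarrow> sup_norm x \<le> 1"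
  shows "compact_support (\<lambda>x. u x / Z)"
proof -
  have "{x. u x / Z \<noteq> 0} \<subseteq> cbox (0 - (\<chi> i. 1)) (0 + (\<chi> i. 1))"
    using assms cube_iff[of _ 0 1] by auto
  then have "bounded {x. u x / Z \<noteq> 0}" using bounded_cbox bounded_subset by blast
  then show ?thesis unfolding compact_support_def by simp
qed

lemma mode_reg_scale:
  fixes u :: "real^'n \<Rightarrow> real"
  assumes Z: "0 < Z" and c: "0 \<le> c"
    and lo: "\<And>x. u x0 - C * sup_norm (x - x0) powr \<beta> \<le> u x"
    and up: "\<And>x. u x \<le> u x0 - c * min (sup_norm (x - x0)) 1 powr \<beta>"
    and c0: "c0 \<le> c / Z" and C0: "C / Z \<le> C0" and b: "0 < \<beta>"
  shows "mode_regular c0 C0 1 \<beta> (\<lambda>x. u x / Z) x0"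
  unfolding mode_regular_def
proof (intro conjI allI impI)
  fix x assume "sup_norm (x - x0) \<le> 1"
  then have m: "min (sup_norm (x - x0)) 1 = sup_norm (x - x0)" by simp
  have p: "0 \<le> sup_norm (x - x0) powr \<beta>" by simp
  have e1: "u x0 / Z - C / Z * sup_norm (x - x0) powr \<beta> = (u x0 - C * sup_norm (x - x0) powr \<beta>) / Z"
    using Z by (simp add: field_simps)
  have "u x0 / Z - C / Z * sup_norm (x - x0) powr \<beta> \<le> u x / Z"
    unfolding e1 using lo[of x] Z by (intro divide_right_mono) auto
  moreover have "C0 * sup_norm (x - x0) powr \<beta> \<ge> C / Z * sup_norm (x - x0) powr \<beta>"
    by (rule mult_right_mono[OF C0 p])
  ultimately show "u x0 / Z - C0 * sup_norm (x - x0) powr \<beta> \<le> u x / Z" by linarith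
  have e2: "u x0 / Z - c / Z * sup_norm (x - x0) powr \<beta> = (u x0 - c * sup_norm (x - x0) powr \<beta>) / Z"
    using Z by (simp add: field_simps)
  have "u x / Z \<le> u x0 / Z - c / Z * sup_norm (x - x0) powr \<beta>"
    unfolding e2 using up[of x] Z m by (intro divide_right_mono) auto
  moreover have "c0 * sup_norm (x - x0) powr \<beta> \<le> c / Z * sup_norm (x - x0) powr \<beta>"
    by (rule mult_right_mono[OF c0 p])
  ultimately show "u x / Z \<le> u x0 / Z - c0 * sup_norm (x - x0) powr \<beta>" by linarith
next
  fix x assume "1 \<le> sup_norm (x - x0)"
  then have m: "min (sup_norm (x - x0)) 1 = 1" by simp
  have e3: "u x0 / Z - c / Z = (u x0 - c) / Z"
    using Z by (simp add: field_simps)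
  have "u x / Z \<le> u x0 / Z - c / Z"
    unfolding e3 using up[of x] Z m by (intro divide_right_mono) auto
  then show "u x / Z \<le> u x0 / Z - c0 * 1 powr \<beta>" using c0 by simp
qed

lemma unique_from_reg:
  assumes "mode_regular c0 C0 h0 \<beta> f x0" "0 < c0" "0 < h0" "0 < \<beta>"
  shows "unique_mode f (x0::real^'n)"
  unfolding unique_mode_def
proof (intro allI impI)
  fix x assume "x \<noteq> x0"
  then have pos: "0 < sup_norm (x - x0)" using sup_norm_zero_iff[of "x - x0"] sup_norm_nonneg[of "x - x0"] by auto
  show "f x < f x0"
  proof (cases "sup_norm (x - x0) \<le> h0")
    case True
    then have "f x \<le> f x0 - c0 * sup_norm (x - x0) powr \<beta>" using assms(1) unfolding mode_regular_def by blast
    moreover have "0 < c0 * sup_norm (x - x0) powr \<beta>" using pos assms by simp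
    ultimately show ?thesis by linarith
  next
    case False
    then have "f x \<le> f x0 - c0 * h0 powr \<beta>" using assms(1) unfolding mode_regular_def by auto
    moreover have "0 < c0 * h0 powr \<beta>" using assms by simp
    ultimately show ?thesis by linarith
  qed
qed



lemma indicator_PiE_prod:
  assumes "\<omega> \<in> extensional I" "finite I"
  shows "(indicator (Pi\<^sub>E I A) \<omega> :: ennreal) = (\<Prod>i\<in>I. indicator (A i) (\<omega> i))"
proof (cases "\<omega> \<in> Pi\<^sub>E I A")
  case True
  then show ?thesis by (auto simp: indicator_def PiE_def Pi_def intro!: prod.neutral)
next
  case False
  then obtain i where "i \<in> I" "\<omega> i \<notin> A i" using assms(1) by (auto simp: PiE_def Pi_def)
  then show ?thesis using False assms(2) by (auto simp: indicator_def)
qed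

lemma PiM_density:
  fixes M :: "'a measure" and r :: "'a \<Rightarrow> ennreal"
  assumes P: "prob_space M" and Pr: "prob_space (density M r)"
    and [measurable]: "r \<in> borel_measurable M" and fin: "finite I"
  shows "PiM I (\<lambda>_. density M r) = density (PiM I (\<lambda>_. M)) (\<lambda>\<omega>. \<Prod>i\<in>I. r (\<omega> i))"
proof -
  interpret S: product_sigma_finite "\<lambda>_. M"
    by (rule product_sigma_finite.intro) (rule prob_space_imp_sigma_finite[OF P])
  interpret SD: product_sigma_finite "\<lambda>_. density M r"
    by (rule product_sigma_finite.intro) (rule prob_space_imp_sigma_finite[OF Pr])
  show ?thesis
  proof (rule SD.PiM_eqI[symmetric, OF fin])
    show "sets (density (PiM I (\<lambda>_. M)) (\<lambda>\<omega>. \<Prod>i\<in>I. r (\<omega> i))) = sets (PiM I (\<lambda>_. density M r))"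
      unfolding sets_density by (rule sets_PiM_cong) auto
  next
    fix A assume A: "\<And>i. i \<in> I \<Longrightarrow> A i \<in> sets (density M r)"
    then have A': "\<And>i. i \<in> I \<Longrightarrow> A i \<in> sets M" by simp
    have PA: "Pi\<^sub>E I A \<in> sets (PiM I (\<lambda>_. M))" using A' fin by (intro sets_PiM_I_finite) auto
    have m: "(\<lambda>\<omega>. \<Prod>i\<in>I. r (\<omega> i)) \<in> borel_measurable (PiM I (\<lambda>_. M))"
      by measurable
    have "emeasure (density (PiM I (\<lambda>_. M)) (\<lambda>\<omega>. \<Prod>i\<in>I. r (\<omega> i))) (Pi\<^sub>E I A)
        = (\<integral>\<^sup>+ \<omega>. (\<Prod>i\<in>I. r (\<omega> i)) * indicator (Pi\<^sub>E I A) \<omega> \<partial>PiM I (\<lambda>_. M))"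
      by (rule emeasure_density[OF m PA])
    also have "\<dots> = (\<integral>\<^sup>+ \<omega>. (\<Prod>i\<in>I. r (\<omega> i) * indicator (A i) (\<omega> i)) \<partial>PiM I (\<lambda>_. M))"
    proof (rule nn_integral_cong)
      fix \<omega> assume "\<omega> \<in> space (PiM I (\<lambda>_. M))"
      then have "\<omega> \<in> extensional I" by (simp add: space_PiM PiE_def)
      then show "(\<Prod>i\<in>I. r (\<omega> i)) * indicator (Pi\<^sub>E I A) \<omega> = (\<Prod>i\<in>I. r (\<omega> i) * indicator (A i) (\<omega> i))"
        using indicator_PiE_prod[of \<omega> I A] fin by (simp add: prod.distrib)
    qed
    also have "\<dots> = (\<Prod>i\<in>I. \<integral>\<^sup>+ x. r x * indicator (A i) x \<partial>M)"
      by (rule S.product_nn_integral_prod[OF fin]) (use A' in measurable)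
    also have "\<dots> = (\<Prod>i\<in>I. emeasure (density M r) (A i))"
      by (rule prod.cong) (use A' in \<open>auto simp: emeasure_density\<close>)
    finally show "emeasure (density (PiM I (\<lambda>_. M)) (\<lambda>\<omega>. \<Prod>i\<in>I. r (\<omega> i))) (Pi\<^sub>E I A)
        = (\<Prod>i\<in>I. emeasure (density M r) (A i))" .
  qed
qed

lemma lecam:
  fixes M :: "'a measure" and r :: "'a \<Rightarrow> real"
  assumes P: "prob_space M" and [measurable]: "r \<in> borel_measurable M"
    and rnn: "\<And>x. 0 \<le> r x"
    and r1: "(\<integral>\<^sup>+ x. ennreal (r x) \<partial>M) = 1"
    and r2: "(\<integral>\<^sup>+ x. ennreal ((r x)^2) \<partial>M) \<le> ennreal q"
    and fin: "finite I" and qn: "q ^ card I \<le> 8/7" and q0: "0 \<le> q"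
    and B: "B \<in> sets (PiM I (\<lambda>_. M))"
  shows "measure (PiM I (\<lambda>_. density M (\<lambda>x. ennreal (r x)))) B - measure (PiM I (\<lambda>_. M)) B \<le> 3/5"
proof -
  let ?P1 = "PiM I (\<lambda>_. M)"
  let ?L = "\<lambda>\<omega>. \<Prod>i\<in>I. r (\<omega> i)"
  interpret S: product_sigma_finite "\<lambda>_. M"
    by (rule product_sigma_finite.intro) (rule prob_space_imp_sigma_finite[OF P])
  interpret P1: prob_space ?P1 by (rule prob_space_PiM) (use P in auto)
  have Pr: "prob_space (density M (\<lambda>x. ennreal (r x)))"
  proof (rule prob_spaceI)
    have "emeasure (density M (\<lambda>x. ennreal (r x))) (space M) = (\<integral>\<^sup>+ x. ennreal (r x) * indicator (space M) x \<partial>M)"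
      by (rule emeasure_density) auto
    also have "\<dots> = (\<integral>\<^sup>+ x. ennreal (r x) \<partial>M)"
      by (rule nn_integral_cong) simp
    finally show "emeasure (density M (\<lambda>x. ennreal (r x))) (space (density M (\<lambda>x. ennreal (r x)))) = 1"
      using r1 by simp
  qed
  have Lm[measurable]: "?L \<in> borel_measurable ?P1" by measurable
  have Lnn: "\<And>\<omega>. 0 \<le> ?L \<omega>" using rnn by (simp add: prod_nonneg)
  have eqP2: "PiM I (\<lambda>_. density M (\<lambda>x. ennreal (r x))) = density ?P1 (\<lambda>\<omega>. ennreal (?L \<omega>))"
    using PiM_density[OF P Pr _ fin] rnn by (simp add: prod_ennreal)
  have intL: "(\<integral>\<^sup>+ \<omega>. ennreal (?L \<omega>) \<partial>?P1) = 1"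
  proof -
    have "(\<integral>\<^sup>+ \<omega>. ennreal (?L \<omega>) \<partial>?P1) = (\<integral>\<^sup>+ \<omega>. (\<Prod>i\<in>I. ennreal (r (\<omega> i))) \<partial>?P1)"
      using rnn by (simp add: prod_ennreal)
    also have "\<dots> = (\<Prod>i\<in>I. \<integral>\<^sup>+ x. ennreal (r x) \<partial>M)"
      by (rule S.product_nn_integral_prod[OF fin]) measurable
    finally show ?thesis using r1 by simp
  qed
  have intL2: "(\<integral>\<^sup>+ \<omega>. ennreal ((?L \<omega>)^2) \<partial>?P1) \<le> ennreal (8/7)"
  proof -
    have "(\<integral>\<^sup>+ \<omega>. ennreal ((?L \<omega>)^2) \<partial>?P1) = (\<integral>\<^sup>+ \<omega>. (\<Prod>i\<in>I. ennreal ((r (\<omega> i))^2)) \<partial>?P1)"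
      by (simp add: prod_ennreal prod_power_distrib)
    also have "\<dots> = (\<Prod>i\<in>I. \<integral>\<^sup>+ x. ennreal ((r x)^2) \<partial>M)"
      by (rule S.product_nn_integral_prod[OF fin]) measurable
    also have "\<dots> = (\<integral>\<^sup>+ x. ennreal ((r x)^2) \<partial>M) ^ card I"
      by (simp add: prod_constant)
    also have "\<dots> \<le> (ennreal q) ^ card I"
      by (rule power_mono[OF r2]) simp
    also have "\<dots> = ennreal (q ^ card I)" using q0 by (simp add: ennreal_power)
    also have "\<dots> \<le> ennreal (8/7)" using qn by (simp add: ennreal_leI)
    finally show ?thesis .
  qed
  have iL: "integrable ?P1 ?L"
    by (rule integrableI_nn_integral_finite[OF Lm _ intL[unfolded ennreal_1[symmetric]]]) (use Lnn in auto)
  have iL2: "integrable ?P1 (\<lambda>\<omega>. (?L \<omega>)^2)"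
  proof (rule integrableI_bounded)
    show "(\<integral>\<^sup>+ \<omega>. ennreal (norm ((?L \<omega>)^2)) \<partial>?P1) < \<infinity>"
      using intL2 by (simp add: le_less_trans)
  qed measurable
  have EL: "integral\<^sup>L ?P1 ?L = 1"
    using nn_integral_eq_integral[OF iL] intL Lnn by (simp add: ennreal_1[symmetric] del: ennreal_1)
  have EL2: "integral\<^sup>L ?P1 (\<lambda>\<omega>. (?L \<omega>)^2) \<le> 8/7"
  proof -
    have "ennreal (integral\<^sup>L ?P1 (\<lambda>\<omega>. (?L \<omega>)^2)) \<le> ennreal (8/7)"
      using nn_integral_eq_integral[OF iL2] intL2 by simp
    then show ?thesis by (simp add: ennreal_le_iff2)
  qed
  have BS: "B \<subseteq> space ?P1" using B sets.sets_into_space by blast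
  have iLB: "integrable ?P1 (\<lambda>\<omega>. ?L \<omega> * indicator B \<omega>)"
    by (rule integrable_real_mult_indicator[OF B iL])
  have m2: "measure (PiM I (\<lambda>_. density M (\<lambda>x. ennreal (r x)))) B = integral\<^sup>L ?P1 (\<lambda>\<omega>. ?L \<omega> * indicator B \<omega>)"
  proof -
    have "emeasure (density ?P1 (\<lambda>\<omega>. ennreal (?L \<omega>))) B = (\<integral>\<^sup>+ \<omega>. ennreal (?L \<omega>) * indicator B \<omega> \<partial>?P1)"
      by (rule emeasure_density) (use B in measurable)
    also have "\<dots> = (\<integral>\<^sup>+ \<omega>. ennreal (?L \<omega> * indicator B \<omega>) \<partial>?P1)"
      by (rule nn_integral_cong) (simp add: indicator_def)
    also have "\<dots> = ennreal (integral\<^sup>L ?P1 (\<lambda>\<omega>. ?L \<omega> * indicator B \<omega>))"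
      by (rule nn_integral_eq_integral[OF iLB]) (use Lnn in auto)
    finally show ?thesis unfolding eqP2 measure_def
      using Lnn by (simp add: integral_nonneg_AE)
  qed
  have m1: "measure ?P1 B = integral\<^sup>L ?P1 (indicator B)"
    using BS by (simp add: Int_absorb2)
  have pw: "?L \<omega> * indicator B \<omega> - indicator B \<omega> \<le> 5/4 * (?L \<omega>)^2 - 5/2 * ?L \<omega> + 29/20" for \<omega>
  proof -
    have "0 \<le> 5/4 * (?L \<omega> - 7/5)^2" by simp
    moreover have "0 \<le> 5/4 * (?L \<omega> - 1)^2 + 1/5" by simp
    ultimately show ?thesis by (auto simp: indicator_def power2_eq_square algebra_simps)
  qed
  have iB: "integrable ?P1 (indicator B :: _ \<Rightarrow> real)"
    by (rule integrable_real_indicator[OF B]) (use P1.emeasure_finite[of B] in \<open>simp add: less_top[symmetric]\<close>)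
  have "measure (PiM I (\<lambda>_. density M (\<lambda>x. ennreal (r x)))) B - measure ?P1 B
      = integral\<^sup>L ?P1 (\<lambda>\<omega>. ?L \<omega> * indicator B \<omega> - indicator B \<omega>)"
    unfolding m2 m1 using iLB iB by simp
  also have "\<dots> \<le> integral\<^sup>L ?P1 (\<lambda>\<omega>. 5/4 * (?L \<omega>)^2 - 5/2 * ?L \<omega> + 29/20)"
    by (rule integral_mono) (use iLB iB iL iL2 pw in auto)
  also have "\<dots> = 5/4 * integral\<^sup>L ?P1 (\<lambda>\<omega>. (?L \<omega>)^2) - 5/2 * integral\<^sup>L ?P1 ?L + 29/20"
    using iL iL2 by (simp add: P1.prob_space)
  also have "\<dots> \<le> 3/5" using EL EL2 by simp
  finally show ?thesis .
qed



lemma ratio_pw: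
  fixes g D k Z0 Z :: real
  assumes g: "0 < g" and D: "0 \<le> D" "D \<le> k" and Dg: "D \<noteq> 0 \<Longrightarrow> 1/2 \<le> g"
    and Z0: "0 < Z0" and Z: "0 < Z"
  shows "(g / Z0) * ((Z0 / Z) * (g + D) / g)^2 \<le> (Z0 / Z^2) * (g + (2 + 2*k) * D)"
proof -
  have e: "(g / Z0) * ((Z0 / Z) * (g + D) / g)^2 = (Z0 / Z^2) * ((g + D)^2 / g)"
    using g Z0 Z by (simp add: field_simps power2_eq_square)
  have k: "D * D \<le> 2 * k * D * g"
  proof (cases "D = 0")
    case False
    then have "1 \<le> 2 * g" using Dg by simp
    then have "D * D \<le> k * D * 1" using D by (simp add: mult_right_mono)
    also have "\<dots> \<le> k * D * (2 * g)" using D \<open>1 \<le> 2 * g\<close> by (intro mult_left_mono) auto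
    finally show ?thesis by (simp add: algebra_simps)
  qed simp
  have "(g + D)^2 / g \<le> g + (2 + 2*k) * D"
    using g k by (simp add: divide_le_eq power2_eq_square algebra_simps)
  then show ?thesis unfolding e using Z0 Z by (intro mult_left_mono) auto
qed

lemma final_arith:
  fixes Z0 m k :: real
  assumes "0 < Z0" "0 \<le> m" "0 \<le> k"
  shows "(Z0 / (Z0 + m)^2) * (Z0 + (2 + 2*k) * m) \<le> 1 + 2 * k * m / Z0"
proof -
  have p: "0 < (Z0 + m)^2" using assms by simp
  have a: "Z0 * (Z0 + 2 * m) \<le> (Z0 + m)^2" using assms by (simp add: power2_eq_square algebra_simps)
  have b: "Z0 * (2 * k * m) * Z0 \<le> 2 * k * m * (Z0 + m)^2"
  proof -
    have "Z0 * Z0 \<le> (Z0 + m)^2" using assms by (simp add: power2_eq_square algebra_simps)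
    then have "(2 * k * m) * (Z0 * Z0) \<le> (2 * k * m) * (Z0 + m)^2"
      using assms by (intro mult_left_mono) auto
    then show ?thesis by (simp add: algebra_simps)
  qed
  have "(Z0 / (Z0 + m)^2) * (Z0 + (2 + 2*k) * m)
      = Z0 * (Z0 + 2 * m) / (Z0 + m)^2 + Z0 * (2 * k * m) / (Z0 + m)^2"
    by (simp add: add_divide_distrib[symmetric] algebra_simps)
  also have "Z0 * (Z0 + 2 * m) / (Z0 + m)^2 \<le> 1" using a p by simp
  also have "Z0 * (2 * k * m) / (Z0 + m)^2 \<le> 2 * k * m / Z0"
    using b p assms(1) by (simp add: divide_le_eq le_divide_eq mult.commute mult.left_commute)
  finally show ?thesis by simp
qed

context L begin

lemma gb_int: "integrable lborel (gb \<beta> :: real^'n \<Rightarrow> real)"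
  "integral\<^sup>L lborel (gb \<beta> :: real^'n \<Rightarrow> real) \<le> 2^CARD('n)"
proof -
  have a: "\<And>x::real^'n. 0 \<le> gb \<beta> x \<and> gb \<beta> x \<le> 1" using gb_nonneg gb_le1 by auto
  have b: "\<And>x::real^'n. gb \<beta> x \<noteq> 0 \<Longrightarrow> sup_norm (x - 0) \<le> 1" using gb_supp by force
  show "integrable lborel (gb \<beta> :: real^'n \<Rightarrow> real)"
    by (rule integrable_supp(1)[OF gb_meas a b zero_le_one])
  show "integral\<^sup>L lborel (gb \<beta> :: real^'n \<Rightarrow> real) \<le> 2^CARD('n)"
    using integrable_supp(2)[OF gb_meas a b zero_le_one] by simp
qed

lemma hb_int: "integrable lborel (hb \<beta> \<delta> :: real^'n \<Rightarrow> real)"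
  "integral\<^sup>L lborel (hb \<beta> \<delta> :: real^'n \<Rightarrow> real) \<le> 2 * 2^CARD('n)"
proof -
  have a: "\<And>x::real^'n. 0 \<le> hb \<beta> \<delta> x \<and> hb \<beta> \<delta> x \<le> 2" using hb_nonneg hb_le2 by auto
  have b: "\<And>x::real^'n. hb \<beta> \<delta> x \<noteq> 0 \<Longrightarrow> sup_norm (x - 0) \<le> 1" using hb_supp by force
  show "integrable lborel (hb \<beta> \<delta> :: real^'n \<Rightarrow> real)"
    by (rule integrable_supp(1)[OF hb_meas a b zero_le_one])
  show "integral\<^sup>L lborel (hb \<beta> \<delta> :: real^'n \<Rightarrow> real) \<le> 2 * 2^CARD('n)"
    using integrable_supp(2)[OF hb_meas a b zero_le_one] by simp
qed

lemma Zg_pos: "0 < integral\<^sup>L lborel (gb \<beta> :: real^'n \<Rightarrow> real)"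
proof -
  define r0 where "r0 = (1/2) powr (1/\<beta>)"
  have r0: "0 < r0" unfolding r0_def by simp
  have r0b: "r0 powr \<beta> = 1/2" unfolding r0_def using bpos by (simp add: powr_powr)
  let ?C = "cbox (0 - (\<chi> i. r0)) (0 + (\<chi> i. r0)) :: (real^'n) set"
  have le: "(1/2) * indicator ?C x \<le> gb \<beta> x" for x :: "real^'n"
  proof (cases "x \<in> ?C")
    case True
    then have "sup_norm (x - 0) \<le> r0" using cube_iff[of x 0 r0] by simp
    then have "sup_norm x powr \<beta> \<le> r0 powr \<beta>" using sup_norm_nonneg[of x] bpos by (intro powr_mono2) auto
    then show ?thesis using True gb_ge[of x] r0b by simp
  next
    case False then show ?thesis using gb_nonneg[of x] by simp
  qed
  have ic: "integrable lborel (\<lambda>x. (1/2) * indicator ?C x :: real)"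
    using emeasure_lborel_cbox_finite by (intro integrable_mult_right integrable_real_indicator) auto
  have "(1/2) * (2 * r0)^CARD('n) \<le> integral\<^sup>L lborel (gb \<beta> :: real^'n \<Rightarrow> real)"
    using integral_mono[OF ic gb_int(1) le] cube_measure[of r0 "0::real^'n"] r0 by simp
  moreover have "0 < (1/2) * (2 * r0)^CARD('n)" using r0 by simp
  ultimately show ?thesis by linarith
qed

lemma Z_le: "integral\<^sup>L lborel (gb \<beta> :: real^'n \<Rightarrow> real) \<le> integral\<^sup>L lborel (hb \<beta> \<delta> :: real^'n \<Rightarrow> real)"
  by (rule integral_mono[OF gb_int(1) hb_int(1)]) (rule hb_ge)

lemma D_int: "integral\<^sup>L lborel (hb \<beta> \<delta> :: real^'n \<Rightarrow> real) - integral\<^sup>L lborel (gb \<beta> :: real^'n \<Rightarrow> real)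
   \<le> Kc \<beta> * \<delta> powr \<beta> * (2 * \<delta>)^CARD('n)"
proof -
  let ?D = "\<lambda>x::real^'n. hb \<beta> \<delta> x - gb \<beta> x"
  have m: "?D \<in> borel_measurable lborel" by measurable
  have a: "\<And>x::real^'n. 0 \<le> ?D x \<and> ?D x \<le> Kc \<beta> * \<delta> powr \<beta>" using hb_ge hb_diff by auto
  have b: "\<And>x::real^'n. ?D x \<noteq> 0 \<Longrightarrow> sup_norm (x - av \<delta>) \<le> \<delta>" using region by force
  have "integral\<^sup>L lborel ?D \<le> Kc \<beta> * \<delta> powr \<beta> * (2 * \<delta>)^CARD('n)"
    by (rule integrable_supp(2)[OF m a b dpos])
  moreover have "integral\<^sup>L lborel ?D = integral\<^sup>L lborel (hb \<beta> \<delta> :: real^'n \<Rightarrow> real) - integral\<^sup>L lborel (gb \<beta> :: real^'n \<Rightarrow> real)"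
    by (rule Bochner_Integration.integral_diff[OF hb_int(1) gb_int(1)])
  ultimately show ?thesis by linarith
qed

lemma test_bound:
  assumes qn: "(1 + 2 * (Kc \<beta> * \<delta> powr \<beta>) * (integral\<^sup>L lborel (hb \<beta> \<delta> :: real^'n \<Rightarrow> real) - integral\<^sup>L lborel (gb \<beta> :: real^'n \<Rightarrow> real))
      / integral\<^sup>L lborel (gb \<beta> :: real^'n \<Rightarrow> real)) ^ n \<le> 8/7"
  shows "\<forall>\<psi>. \<psi> \<in> sample_law (\<lambda>x::real^'n. gb \<beta> x / integral\<^sup>L lborel (gb \<beta> :: real^'n \<Rightarrow> real)) n \<rightarrow>\<^sub>M count_space {1, 2::nat} \<longrightarrow>
          max (measure (sample_law (\<lambda>x::real^'n. gb \<beta> x / integral\<^sup>L lborel (gb \<beta> :: real^'n \<Rightarrow> real)) n) {\<omega> \<in> space (sample_law (\<lambda>x::real^'n. gb \<beta> x / integral\<^sup>L lborel (gb \<beta> :: real^'n \<Rightarrow> real)) n). \<psi> \<omega> \<noteq> 1})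
              (measure (sample_law (\<lambda>x::real^'n. hb \<beta> \<delta> x / integral\<^sup>L lborel (hb \<beta> \<delta> :: real^'n \<Rightarrow> real)) n) {\<omega> \<in> space (sample_law (\<lambda>x::real^'n. hb \<beta> \<delta> x / integral\<^sup>L lborel (hb \<beta> \<delta> :: real^'n \<Rightarrow> real)) n). \<psi> \<omega> \<noteq> 2})
            \<ge> 1 / 5"
proof (intro allI impI)
  fix \<psi> :: "(nat \<Rightarrow> real^'n) \<Rightarrow> nat"
  define Zg where "Zg = integral\<^sup>L lborel (gb \<beta> :: real^'n \<Rightarrow> real)"
  define Zh where "Zh = integral\<^sup>L lborel (hb \<beta> \<delta> :: real^'n \<Rightarrow> real)"
  define f1 where "f1 = (\<lambda>x::real^'n. gb \<beta> x / Zg)"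
  define f2 where "f2 = (\<lambda>x::real^'n. hb \<beta> \<delta> x / Zh)"
  define rr where "rr = (\<lambda>x::real^'n. if gb \<beta> x = 0 then 0 else (Zg / Zh) * hb \<beta> \<delta> x / gb \<beta> x)"
  define k where "k = Kc \<beta> * \<delta> powr \<beta>"
  define q where "q = 1 + 2 * k * (Zh - Zg) / Zg"
  define M where "M = density lborel (\<lambda>x. ennreal (f1 x))"
  assume psi: "\<psi> \<in> sample_law (\<lambda>x::real^'n. gb \<beta> x / integral\<^sup>L lborel (gb \<beta> :: real^'n \<Rightarrow> real)) n \<rightarrow>\<^sub>M count_space {1, 2::nat}"
  have Zg: "0 < Zg" unfolding Zg_def by (rule Zg_pos)
  have ZgZh: "Zg \<le> Zh" unfolding Zg_def Zh_def by (rule Z_le)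
  have Zh: "0 < Zh" using Zg ZgZh by linarith
  have k0: "0 \<le> k" unfolding k_def using Kc_ge2 by simp
  have [measurable]: "f1 \<in> borel_measurable lborel" "f2 \<in> borel_measurable lborel"
    "rr \<in> borel_measurable lborel" unfolding f1_def f2_def rr_def by measurable
  have f1nn: "\<And>x. 0 \<le> f1 x" unfolding f1_def using Zg by (simp add: gb_nonneg)
  have f2nn: "\<And>x. 0 \<le> f2 x" unfolding f2_def using Zh by (simp add: hb_nonneg)
  have rrnn: "\<And>x. 0 \<le> rr x" unfolding rr_def using Zg Zh by (simp add: gb_nonneg hb_nonneg)
  have pd1: "prob_density f1" unfolding f1_def Zg_def
    by (rule prob_density_norm[OF gb_meas _ gb_int(1) Zg_pos]) (rule gb_nonneg)
  have pd2: "prob_density f2" unfolding f2_def Zh_def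
    using prob_density_norm[OF hb_meas _ hb_int(1)] hb_nonneg Zh Zh_def by blast
  have fr: "f1 x * rr x = f2 x" for x
  proof (cases "gb \<beta> x = 0")
    case True
    then show ?thesis unfolding f1_def f2_def rr_def using gb_eq_when_zero[OF True] by simp
  next
    case False
    then show ?thesis unfolding f1_def f2_def rr_def using Zg Zh by (simp add: field_simps)
  qed
  have PM: "prob_space M" unfolding M_def
  proof (rule prob_spaceI)
    show "emeasure (density lborel (\<lambda>x. ennreal (f1 x))) (space (density lborel (\<lambda>x. ennreal (f1 x)))) = 1"
      using pd1 unfolding prob_density_def by (simp add: emeasure_density)
  qed
  have dens: "density M (\<lambda>x. ennreal (rr x)) = density lborel (\<lambda>x. ennreal (f2 x))"
  proof -
    have "density M (\<lambda>x. ennreal (rr x)) = density lborel (\<lambda>x. ennreal (f1 x) * ennreal (rr x))"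
      unfolding M_def by (rule density_density_eq) measurable
    also have "(\<lambda>x. ennreal (f1 x) * ennreal (rr x)) = (\<lambda>x. ennreal (f2 x))"
      using fr f1nn rrnn by (auto simp: ennreal_mult[symmetric])
    finally show ?thesis .
  qed
  have rm: "rr \<in> borel_measurable M" unfolding M_def by simp
  have r1: "(\<integral>\<^sup>+ x. ennreal (rr x) \<partial>M) = 1"
  proof -
    have "(\<integral>\<^sup>+ x. ennreal (rr x) \<partial>M) = (\<integral>\<^sup>+ x. ennreal (f1 x) * ennreal (rr x) \<partial>lborel)"
      unfolding M_def by (rule nn_integral_density) measurable
    also have "\<dots> = (\<integral>\<^sup>+ x. ennreal (f2 x) \<partial>lborel)"
      using fr f1nn rrnn by (simp add: ennreal_mult[symmetric])
    finally show ?thesis using pd2 unfolding prob_density_def by simp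
  qed
  define w where "w = (\<lambda>x::real^'n. (Zg / Zh^2) * (gb \<beta> x + (2 + 2*k) * (hb \<beta> \<delta> x - gb \<beta> x)))"
  have wi: "integrable lborel w" unfolding w_def by (simp add: gb_int(1) hb_int(1))
  have wint: "integral\<^sup>L lborel w = (Zg / Zh^2) * (Zg + (2 + 2*k) * (Zh - Zg))"
    unfolding w_def Zg_def Zh_def by (simp add: gb_int(1) hb_int(1))
  have wnn: "0 \<le> w x" for x unfolding w_def using Zg Zh hb_ge[of x] gb_nonneg[of x] k0 by simp
  have pw: "f1 x * (rr x)^2 \<le> w x" for x
  proof (cases "gb \<beta> x = 0")
    case True then show ?thesis using wnn[of x] unfolding f1_def rr_def by simp
  next
    case False
    have g: "0 < gb \<beta> x" using False gb_nonneg[of x] by simp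
    have "gb \<beta> x / Zg * ((Zg / Zh) * (gb \<beta> x + (hb \<beta> \<delta> x - gb \<beta> x)) / gb \<beta> x)^2
        \<le> (Zg / Zh^2) * (gb \<beta> x + (2 + 2*k) * (hb \<beta> \<delta> x - gb \<beta> x))"
    proof (rule ratio_pw[OF g])
      show "0 \<le> hb \<beta> \<delta> x - gb \<beta> x" using hb_ge[of x] by simp
      show "hb \<beta> \<delta> x - gb \<beta> x \<le> k" unfolding k_def by (rule hb_diff)
      show "hb \<beta> \<delta> x - gb \<beta> x \<noteq> 0 \<Longrightarrow> 1 / 2 \<le> gb \<beta> x" using region_g by simp
    qed (use Zg Zh in auto)
    then show ?thesis unfolding f1_def rr_def w_def using False by simp
  qed
  have r2: "(\<integral>\<^sup>+ x. ennreal ((rr x)^2) \<partial>M) \<le> ennreal q"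
  proof -
    have "(\<integral>\<^sup>+ x. ennreal ((rr x)^2) \<partial>M) = (\<integral>\<^sup>+ x. ennreal (f1 x) * ennreal ((rr x)^2) \<partial>lborel)"
      unfolding M_def by (rule nn_integral_density) measurable
    also have "\<dots> = (\<integral>\<^sup>+ x. ennreal (f1 x * (rr x)^2) \<partial>lborel)"
      using f1nn by (simp add: ennreal_mult[symmetric])
    also have "\<dots> \<le> (\<integral>\<^sup>+ x. ennreal (w x) \<partial>lborel)"
      by (rule nn_integral_mono) (use pw in \<open>simp add: ennreal_leI\<close>)
    also have "\<dots> = ennreal (integral\<^sup>L lborel w)"
      by (rule nn_integral_eq_integral[OF wi]) (use wnn in auto)
    also have "integral\<^sup>L lborel w \<le> q"
    proof -
      have "(Zg / (Zg + (Zh - Zg))^2) * (Zg + (2 + 2*k) * (Zh - Zg)) \<le> 1 + 2 * k * (Zh - Zg) / Zg"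
        by (rule final_arith) (use Zg ZgZh k0 in auto)
      then show ?thesis unfolding wint q_def by simp
    qed
    finally show ?thesis by (simp add: ennreal_leI)
  qed
  have q0: "0 \<le> q" unfolding q_def using Zg ZgZh k0 by simp
  have qn': "q ^ card {..<n} \<le> 8/7" using qn unfolding q_def k_def Zg_def Zh_def by simp
  have S1: "sample_law (\<lambda>x::real^'n. gb \<beta> x / integral\<^sup>L lborel (gb \<beta> :: real^'n \<Rightarrow> real)) n = PiM {..<n} (\<lambda>_. M)"
    unfolding sample_law_def M_def f1_def Zg_def ..
  have S2: "sample_law (\<lambda>x::real^'n. hb \<beta> \<delta> x / integral\<^sup>L lborel (hb \<beta> \<delta> :: real^'n \<Rightarrow> real)) n
      = PiM {..<n} (\<lambda>_. density M (\<lambda>x. ennreal (rr x)))"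
    unfolding sample_law_def dens f2_def Zh_def ..
  let ?P1 = "PiM {..<n} (\<lambda>_. M)"
  let ?P2 = "PiM {..<n} (\<lambda>_. density M (\<lambda>x. ennreal (rr x)))"
  define B where "B = {\<omega> \<in> space ?P1. \<psi> \<omega> \<noteq> 1}"
  have psi': "\<psi> \<in> ?P1 \<rightarrow>\<^sub>M count_space {1, 2::nat}" using psi S1 by simp
  have B_eq: "B = \<psi> -` {2} \<inter> space ?P1"
    unfolding B_def using measurable_space[OF psi'] by auto
  have Bs: "B \<in> sets ?P1" unfolding B_eq by (rule measurable_sets[OF psi']) simp
  have sp: "space ?P2 = space ?P1" by (simp add: space_PiM M_def)
  have B2: "{\<omega> \<in> space ?P2. \<psi> \<omega> \<noteq> 2} = space ?P2 - B"
    unfolding B_def sp using measurable_space[OF psi'] by auto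
  have Bs2: "B \<in> sets ?P2"
  proof -
    have "sets ?P2 = sets ?P1" by (rule sets_PiM_cong) auto
    then show ?thesis using Bs by simp
  qed
  interpret P2: prob_space ?P2
    by (rule prob_space_PiM) (use dens pd2 in \<open>simp add: prob_density_def prob_spaceI emeasure_density\<close>)
  have LC: "measure ?P2 B - measure ?P1 B \<le> 3/5"
    by (rule lecam[OF PM rm rrnn r1 r2 _ qn' q0 Bs]) simp
  have "measure ?P2 (space ?P2 - B) = 1 - measure ?P2 B" by (rule P2.prob_compl[OF Bs2])
  then have "measure ?P1 B + measure ?P2 {\<omega> \<in> space ?P2. \<psi> \<omega> \<noteq> 2} \<ge> 2/5"
    using LC B2 by simp
  then have "max (measure ?P1 B) (measure ?P2 {\<omega> \<in> space ?P2. \<psi> \<omega> \<noteq> 2}) \<ge> 1/5" by linarith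
  then show "max (measure (sample_law (\<lambda>x::real^'n. gb \<beta> x / integral\<^sup>L lborel (gb \<beta> :: real^'n \<Rightarrow> real)) n) {\<omega> \<in> space (sample_law (\<lambda>x::real^'n. gb \<beta> x / integral\<^sup>L lborel (gb \<beta> :: real^'n \<Rightarrow> real)) n). \<psi> \<omega> \<noteq> 1})
              (measure (sample_law (\<lambda>x::real^'n. hb \<beta> \<delta> x / integral\<^sup>L lborel (hb \<beta> \<delta> :: real^'n \<Rightarrow> real)) n) {\<omega> \<in> space (sample_law (\<lambda>x::real^'n. hb \<beta> \<delta> x / integral\<^sup>L lborel (hb \<beta> \<delta> :: real^'n \<Rightarrow> real)) n). \<psi> \<omega> \<noteq> 2})
            \<ge> 1 / 5"
    unfolding S1 S2 B_def by simp
qed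

end


lemma exp_eighth: "exp (1/8::real) \<le> 8/7"
proof -
  have a: "7/8 \<le> exp (-1/8::real)" using exp_ge_add_one_self[of "-1/8::real"] by simp
  have "exp (1/8::real) * exp (-1/8) = 1" by (simp add: exp_add[symmetric])
  then have "exp (1/8::real) = 1 / exp (-1/8)" by (simp add: field_simps)
  also have "\<dots> \<le> 1 / (7/8)" using a by (intro divide_left_mono) auto
  finally show ?thesis by simp
qed

lemma numerics:
  fixes \<beta> Zg K A \<Delta> :: real and n d :: nat
  assumes b: "0 < \<beta>" and Zg: "0 < Zg" and K: "0 \<le> K" and A1: "1 \<le> A"
    and AK: "16 * K^2 * 2^d / Zg \<le> A" and d: "1 \<le> d"
    and D0: "0 \<le> \<Delta>"
    and D: "\<Delta> \<le> K * (real n powr (- 1 / (real d + 2 * \<beta>)) / A) powr \<beta> * (2 * (real n powr (- 1 / (real d + 2 * \<beta>)) / A))^d"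
  shows "(1 + 2 * (K * (real n powr (- 1 / (real d + 2 * \<beta>)) / A) powr \<beta>) * \<Delta> / Zg) ^ n \<le> 8/7"
proof (cases "n = 0")
  case True then show ?thesis by simp
next
  case False
  define E where "E = real d + 2 * \<beta>"
  define \<delta> where "\<delta> = real n powr (- 1 / E) / A"
  have E: "1 \<le> E" unfolding E_def using d b by simp
  have n1: "1 \<le> real n" using False by simp
  have dpos: "0 < \<delta>" unfolding \<delta>_def using n1 A1 by simp
  define ch where "ch = 2 * (K * \<delta> powr \<beta>) * \<Delta> / Zg"
  have chi0: "0 \<le> ch" unfolding ch_def using K D0 Zg by simp
  have D': "\<Delta> \<le> K * \<delta> powr \<beta> * (2 * \<delta>)^d" using D unfolding \<delta>_def E_def .
  have "ch \<le> 2 * (K * \<delta> powr \<beta>) * (K * \<delta> powr \<beta> * (2 * \<delta>)^d) / Zg"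
    unfolding ch_def using D' K Zg by (intro divide_right_mono mult_left_mono) auto
  also have "\<dots> = 2 * K^2 * 2^d / Zg * (\<delta> powr (2 * \<beta>) * \<delta>^d)"
    using dpos by (simp add: power2_eq_square power_mult_distrib powr_add[symmetric] field_simps)
  also have "\<delta> powr (2 * \<beta>) * \<delta>^d = \<delta> powr E"
    unfolding E_def using dpos by (simp add: powr_add powr_realpow)
  also have "\<delta> powr E = 1 / (real n * A powr E)"
  proof -
    have "\<delta> powr E = (real n powr (- 1 / E)) powr E / A powr E"
      unfolding \<delta>_def using A1 by (simp add: powr_divide)
    also have "(real n powr (- 1 / E)) powr E = real n powr (-1)"
      using E by (simp add: powr_powr)
    also have "\<dots> = 1 / real n" using n1 by (simp add: powr_minus divide_inverse)
    finally show ?thesis by simp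
  qed
  finally have chi: "ch \<le> 2 * K^2 * 2^d / Zg * (1 / (real n * A powr E))" .
  have AE: "A \<le> A powr E" using powr_mono[OF E A1] A1 by simp
  have "real n * ch \<le> real n * (2 * K^2 * 2^d / Zg * (1 / (real n * A powr E)))"
    using chi n1 by (intro mult_left_mono) auto
  also have "\<dots> = 2 * K^2 * 2^d / Zg / A powr E" using n1 by (simp add: field_simps)
  also have "\<dots> \<le> 2 * K^2 * 2^d / Zg / A"
    using AE A1 Zg by (intro divide_left_mono) auto
  also have "\<dots> \<le> 1/8"
  proof -
    have "2 * K^2 * 2^d / Zg = (16 * K^2 * 2^d / Zg) / 8" by simp
    also have "\<dots> \<le> A / 8" using AK by simp
    finally have h: "2 * K^2 * 2^d / Zg \<le> A / 8" .
    have "2 * K^2 * 2^d / Zg / A \<le> (A / 8) / A" using A1 by (intro divide_right_mono[OF h]) auto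
    then show ?thesis using A1 by simp
  qed
  finally have nchi: "real n * ch \<le> 1/8" .
  have "(1 + ch) ^ n \<le> (exp ch) ^ n"
    using chi0 by (intro power_mono) (auto simp: exp_ge_add_one_self add.commute)
  also have "\<dots> = exp (real n * ch)" by (simp add: exp_of_nat_mult)
  also have "\<dots> \<le> exp (1/8)" using nchi by simp
  also have "\<dots> \<le> 8/7" by (rule exp_eighth)
  finally show ?thesis unfolding ch_def \<delta>_def E_def .
qed

theorem theorem2:
  fixes \<beta> :: real
  assumes "\<beta> > 0"
  shows "\<exists>c0 C0 h0 A :: real. 0 < c0 \<and> c0 < C0 \<and> h0 > 0 \<and> A > 0 \<and>
    (\<forall>n::nat. \<exists>(f1 :: real^'n \<Rightarrow> real) f2 x1 x2.
       prob_density f1 \<and> prob_density f2 \<and>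
       compact_support f1 \<and> compact_support f2 \<and>
       unique_mode f1 x1 \<and> unique_mode f2 x2 \<and>
       mode_regular c0 C0 h0 \<beta> f1 x1 \<and> mode_regular c0 C0 h0 \<beta> f2 x2 \<and>
       sup_norm (x1 - x2) \<ge> real n powr (- 1 / (real CARD('n) + 2 * \<beta>)) / A \<and>
       (\<forall>\<psi>. \<psi> \<in> sample_law f1 n \<rightarrow>\<^sub>M count_space {1, 2::nat} \<longrightarrow>
          max (measure (sample_law f1 n) {\<omega> \<in> space (sample_law f1 n). \<psi> \<omega> \<noteq> 1})
              (measure (sample_law f2 n) {\<omega> \<in> space (sample_law f2 n). \<psi> \<omega> \<noteq> 2})
            \<ge> 1 / 5))"
proof -
  let ?d = "CARD('n)"
  define Zg where "Zg = integral\<^sup>L lborel (gb \<beta> :: real^'n \<Rightarrow> real)"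
  define K where "K = Kc \<beta>"
  define c0 where "c0 = 2 powr (-\<beta>) / (2 * 2^?d)"
  define C0 where "C0 = K / Zg"
  define A where "A = max (2 * 2 powr (1/\<beta>)) (16 * K^2 * 2^?d / Zg)"
  have L0: "L \<beta> 0" by unfold_locales (use assms in auto)
  have Zg: "0 < Zg" unfolding Zg_def by (rule L.Zg_pos[OF L0])
  have Zg2: "Zg \<le> 2^?d" unfolding Zg_def by (rule L.gb_int(2)[OF L0])
  have K2: "2 \<le> K" unfolding K_def by (rule L.Kc_ge2[OF L0])
  have pb1: "2 powr (-\<beta>) \<le> 1" using powr_mono[of "-\<beta>" 0 2] assms by simp
  have c0pos: "0 < c0" unfolding c0_def by simp
  have c0g: "c0 \<le> 1 / Zg"
  proof -
    have "c0 \<le> 1 / (2 * 2^?d)" unfolding c0_def using pb1 by (intro divide_right_mono) auto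
    also have "\<dots> \<le> 1 / Zg" using Zg Zg2 by (intro divide_left_mono) auto
    finally show ?thesis .
  qed
  have c0C0: "c0 < C0"
  proof -
    have "1 / Zg < K / Zg" using K2 Zg by (simp add: divide_strict_right_mono)
    then show ?thesis using c0g unfolding C0_def by linarith
  qed
  have A1: "2 * 2 powr (1/\<beta>) \<le> A" unfolding A_def by simp
  have A2: "16 * K^2 * 2^?d / Zg \<le> A" unfolding A_def by simp
  have Age1: "1 \<le> A" using A1 by (smt (verit) ge_one_powr_ge_zero assms less_eq_real_def zero_le_divide_1_iff)
  have main: "\<forall>n::nat. \<exists>(f1 :: real^'n \<Rightarrow> real) f2 x1 x2.
       prob_density f1 \<and> prob_density f2 \<and>
       compact_support f1 \<and> compact_support f2 \<and>
       unique_mode f1 x1 \<and> unique_mode f2 x2 \<and>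
       mode_regular c0 C0 1 \<beta> f1 x1 \<and> mode_regular c0 C0 1 \<beta> f2 x2 \<and>
       sup_norm (x1 - x2) \<ge> real n powr (- 1 / (real CARD('n) + 2 * \<beta>)) / A \<and>
       (\<forall>\<psi>. \<psi> \<in> sample_law f1 n \<rightarrow>\<^sub>M count_space {1, 2::nat} \<longrightarrow>
          max (measure (sample_law f1 n) {\<omega> \<in> space (sample_law f1 n). \<psi> \<omega> \<noteq> 1})
              (measure (sample_law f2 n) {\<omega> \<in> space (sample_law f2 n). \<psi> \<omega> \<noteq> 2})
            \<ge> 1 / 5)"
  proof (rule allI)
    fix n :: nat
    define \<delta> where "\<delta> = real n powr (- 1 / (real CARD('n) + 2 * \<beta>)) / A"
    have d0: "0 \<le> \<delta>" unfolding \<delta>_def using Age1 by simp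
    have dA: "\<delta> \<le> 1 / A"
    proof (cases "n = 0")
      case True then show ?thesis unfolding \<delta>_def using Age1 by simp
    next
      case False
      have "real n powr (- 1 / (real CARD('n) + 2 * \<beta>)) \<le> real n powr 0"
        using False assms by (intro powr_mono) (auto simp: divide_nonpos_pos)
      then have "real n powr (- 1 / (real CARD('n) + 2 * \<beta>)) \<le> 1" using False by simp
      then show ?thesis unfolding \<delta>_def using Age1 by (intro divide_right_mono) auto
    qed
    have dsm: "(2 * \<delta>) powr \<beta> \<le> 1/2"
    proof -
      have "2 * \<delta> \<le> 2 / A" using dA by simp
      also have "\<dots> \<le> 2 / (2 * 2 powr (1/\<beta>))" using A1 Age1 by (intro divide_left_mono) auto
      also have "\<dots> = 2 powr (-(1/\<beta>))" by (simp add: powr_minus_divide)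
      finally have "(2 * \<delta>) powr \<beta> \<le> (2 powr (-(1/\<beta>))) powr \<beta>"
        using d0 assms by (intro powr_mono2) auto
      also have "\<dots> = 2 powr (-(1/\<beta>) * \<beta>)" by (rule powr_powr)
      also have "-(1/\<beta>) * \<beta> = -1" using assms by simp
      also have "(2::real) powr (-1) = 1/2" by (simp add: powr_minus_divide)
      finally show ?thesis .
    qed
    interpret Ld: L \<beta> \<delta> by unfold_locales (use assms d0 dsm in auto)
    define Zh where "Zh = integral\<^sup>L lborel (hb \<beta> \<delta> :: real^'n \<Rightarrow> real)"
    have ZgZh: "Zg \<le> Zh" unfolding Zg_def Zh_def by (rule Ld.Z_le)
    have Zh2: "Zh \<le> 2 * 2^?d" unfolding Zh_def by (rule Ld.hb_int(2))
    have Zh: "0 < Zh" using Zg ZgZh by linarith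
    have pd1: "prob_density (\<lambda>x::real^'n. gb \<beta> x / Zg)" unfolding Zg_def
      by (rule prob_density_norm[OF gb_meas _ Ld.gb_int(1) Ld.Zg_pos]) (rule Ld.gb_nonneg)
    have pd2: "prob_density (\<lambda>x::real^'n. hb \<beta> \<delta> x / Zh)" unfolding Zh_def
      by (rule prob_density_norm[OF hb_meas _ Ld.hb_int(1)]) (use Ld.hb_nonneg Zh Zh_def in auto)
    have cs1: "compact_support (\<lambda>x::real^'n. gb \<beta> x / Zg)"
      by (rule compact_supp) (use Ld.gb_supp in force)
    have cs2: "compact_support (\<lambda>x::real^'n. hb \<beta> \<delta> x / Zh)"
      by (rule compact_supp) (use Ld.hb_supp in force)
    have gz: "gb \<beta> (0::real^'n) = 1" by (rule Ld.gb_zero)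
    have ha: "hb \<beta> \<delta> (av \<delta> :: real^'n) = 1 + \<delta> powr \<beta>" by (rule Ld.hb_at)
    have mr1: "mode_regular c0 C0 1 \<beta> (\<lambda>x::real^'n. gb \<beta> x / Zg) 0"
    proof (rule mode_reg_scale[where c=1 and C=1])
      show "0 < Zg" by (rule Zg)
      show "gb \<beta> (0::real^'n) - 1 * sup_norm (x - 0) powr \<beta> \<le> gb \<beta> x" for x :: "real^'n"
        using gz Ld.gb_ge[of x] by simp
      show "gb \<beta> x \<le> gb \<beta> (0::real^'n) - 1 * min (sup_norm (x - 0)) 1 powr \<beta>" for x :: "real^'n"
      proof (cases "sup_norm x \<le> 1")
        case True then show ?thesis using Ld.gb_inner[OF True] gz by simp
      next
        case False then show ?thesis using Ld.gb_outer[of x] gz by simp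
      qed
      show "c0 \<le> 1 / Zg" by (rule c0g)
      show "1 / Zg \<le> C0" unfolding C0_def using K2 Zg by (intro divide_right_mono) auto
    qed (use assms in auto)
    have mr2: "mode_regular c0 C0 1 \<beta> (\<lambda>x::real^'n. hb \<beta> \<delta> x / Zh) (av \<delta>)"
    proof (rule mode_reg_scale[where c="2 powr (-\<beta>)" and C=K])
      show "0 < Zh" by (rule Zh)
      show "hb \<beta> \<delta> (av \<delta> :: real^'n) - K * sup_norm (x - av \<delta>) powr \<beta> \<le> hb \<beta> \<delta> x" for x :: "real^'n"
        using ha Ld.hb_lower[of x] unfolding K_def by simp
      show "hb \<beta> \<delta> x \<le> hb \<beta> \<delta> (av \<delta> :: real^'n) - 2 powr (-\<beta>) * min (sup_norm (x - av \<delta>)) 1 powr \<beta>" for x :: "real^'n"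
        using ha Ld.hb_upper[of x] by simp
      show "c0 \<le> 2 powr (-\<beta>) / Zh" unfolding c0_def using Zh Zh2 by (intro divide_left_mono) auto
      show "K / Zh \<le> C0" unfolding C0_def using K2 Zg ZgZh by (intro divide_left_mono) auto
    qed (use assms in auto)
    have um1: "unique_mode (\<lambda>x::real^'n. gb \<beta> x / Zg) 0"
      by (rule unique_from_reg[OF mr1 c0pos _ assms]) simp
    have um2: "unique_mode (\<lambda>x::real^'n. hb \<beta> \<delta> x / Zh) (av \<delta>)"
      by (rule unique_from_reg[OF mr2 c0pos _ assms]) simp
    have sep: "sup_norm (0 - av \<delta> :: real^'n) = \<delta>"
      using Ld.sup_norm_av sup_norm_minus[of "av \<delta> :: real^'n"] by simp
    have qn: "(1 + 2 * (Kc \<beta> * \<delta> powr \<beta>) * (Zh - Zg) / Zg) ^ n \<le> 8/7"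
    proof -
      have "(1 + 2 * (K * (real n powr (- 1 / (real ?d + 2 * \<beta>)) / A) powr \<beta>) * (Zh - Zg) / Zg) ^ n \<le> 8/7"
      proof (rule numerics[OF assms Zg _ Age1 A2])
        show "0 \<le> K" using K2 by simp
        show "1 \<le> ?d" by (simp add: Suc_le_eq)
        show "0 \<le> Zh - Zg" using ZgZh by simp
        show "Zh - Zg \<le> K * (real n powr (- 1 / (real ?d + 2 * \<beta>)) / A) powr \<beta> * (2 * (real n powr (- 1 / (real ?d + 2 * \<beta>)) / A)) ^ ?d"
          using Ld.D_int unfolding Zh_def Zg_def K_def \<delta>_def by simp
      qed
      then show ?thesis unfolding K_def \<delta>_def by simp
    qed
    have S: "sup_norm (0 - av \<delta> :: real^'n) \<ge> real n powr (- 1 / (real CARD('n) + 2 * \<beta>)) / A"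
      using sep \<delta>_def by linarith
    have T: "\<forall>\<psi>. \<psi> \<in> sample_law (\<lambda>x::real^'n. gb \<beta> x / Zg) n \<rightarrow>\<^sub>M count_space {1, 2::nat} \<longrightarrow>
          max (measure (sample_law (\<lambda>x::real^'n. gb \<beta> x / Zg) n) {\<omega> \<in> space (sample_law (\<lambda>x::real^'n. gb \<beta> x / Zg) n). \<psi> \<omega> \<noteq> 1})
              (measure (sample_law (\<lambda>x::real^'n. hb \<beta> \<delta> x / Zh) n) {\<omega> \<in> space (sample_law (\<lambda>x::real^'n. hb \<beta> \<delta> x / Zh) n). \<psi> \<omega> \<noteq> 2})
            \<ge> 1 / 5"
      using Ld.test_bound[of n, OF qn[unfolded Zg_def Zh_def]] unfolding Zg_def Zh_def .
    show "\<exists>(f1 :: real^'n \<Rightarrow> real) f2 x1 x2.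
       prob_density f1 \<and> prob_density f2 \<and>
       compact_support f1 \<and> compact_support f2 \<and>
       unique_mode f1 x1 \<and> unique_mode f2 x2 \<and>
       mode_regular c0 C0 1 \<beta> f1 x1 \<and> mode_regular c0 C0 1 \<beta> f2 x2 \<and>
       sup_norm (x1 - x2) \<ge> real n powr (- 1 / (real CARD('n) + 2 * \<beta>)) / A \<and>
       (\<forall>\<psi>. \<psi> \<in> sample_law f1 n \<rightarrow>\<^sub>M count_space {1, 2::nat} \<longrightarrow>
          max (measure (sample_law f1 n) {\<omega> \<in> space (sample_law f1 n). \<psi> \<omega> \<noteq> 1})
              (measure (sample_law f2 n) {\<omega> \<in> space (sample_law f2 n). \<psi> \<omega> \<noteq> 2})
            \<ge> 1 / 5)"
      apply (rule exI)+
      apply (intro conjI)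
               apply (rule pd1)
              apply (rule pd2)
             apply (rule cs1)
            apply (rule cs2)
           apply (rule um1)
          apply (rule um2)
         apply (rule mr1)
        apply (rule mr2)
       apply (rule S)
      apply (rule T)
      done
  qed
  show ?thesis
    apply (rule exI[of _ c0], rule exI[of _ C0], rule exI[of _ "1::real"], rule exI[of _ A])
    apply (intro conjI)
        apply (rule c0pos)
       apply (rule c0C0)
      apply simp
    using Age1 apply simp
    apply (rule main)
    done
qed


end
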